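(* Let $\sigma$ be a nonempty finite sequence of nonnegative integers avoiding both patterns $010$ and $210$. Let $q$ be the largest value $\sigma_l$ of $\sigma$ such that there is $i<l$ with $\sigma_i>\sigma_l$, or $q=0$ if no such value exists (i.e. $\sigma$ is nondecreasing), and let $r$ be the number of distinct values of $\sigma$ that are $\geqslant q$. Then $\mathrm{forb}(\sigma,\{010,210\})=q+r$.
   Context: A sequence contains a pattern $p$ if some subsequence is order-isomorphic to $p$; otherwise it avoids $p$. Avoiding $010$: no $i<j<l$ with $\sigma_i=\sigma_l<\sigma_j$. Avoiding $210$: no $i<j<l$ with $\sigma_i>\sigma_j>\sigma_l$. For a sequence $\sigma$ avoiding a set of patterns $P$, a value $v\in\{0,\dots,\max(\sigma)\}$ is forbidden by $\sigma$ and $P$ if the sequence $\sigma\cdot (M,v)$ (σ followed by $M$ then $v$) contains some pattern of $P$, where $M>\max(\sigma)$; $\mathrm{forb}(\sigma,P)$ is the number of such forbidden values. *)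

theory Defs
  imports Main
begin

definition order_iso :: "nat list \<Rightarrow> nat list \<Rightarrow> bool" where
  "order_iso s p \<longleftrightarrow> length s = length p \<and>
     (\<forall>i<length p. \<forall>j<length p. (s ! i < s ! j \<longleftrightarrow> p ! i < p ! j))"

definition contains :: "nat list \<Rightarrow> nat list \<Rightarrow> bool" where
  "contains \<sigma> p \<longleftrightarrow> (\<exists>I. I \<subseteq> {..<length \<sigma>} \<and> order_iso (nths \<sigma> I) p)"

definition avoids :: "nat list \<Rightarrow> nat list \<Rightarrow> bool" where
  "avoids \<sigma> p \<longleftrightarrow> \<not> contains \<sigma> p"

text \<open>Forbidden values; M is taken to be max(sigma)+1 (pattern containment
  only depends on relative order, so any M > max(sigma) gives the same result).\<close>
definition forb :: "nat list \<Rightarrow> nat list set \<Rightarrow> nat" where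
  "forb \<sigma> P = card {v \<in> {0..Max (set \<sigma>)}.
      \<exists>p\<in>P. contains (\<sigma> @ [Suc (Max (set \<sigma>)), v]) p}"

definition q_val :: "nat list \<Rightarrow> nat" where
  "q_val \<sigma> = (let S = {\<sigma> ! l | l. l < length \<sigma> \<and> (\<exists>i<l. \<sigma> ! i > \<sigma> ! l)}
               in if S = {} then 0 else Max S)"

definition r_val :: "nat list \<Rightarrow> nat" where
  "r_val \<sigma> = card {x \<in> set \<sigma>. x \<ge> q_val \<sigma>}"

end

theory Submission imports Defs begin

lemma nths_inter: "nths xs I = nths xs (I \<inter> {..<length xs})"
proof (induction xs arbitrary: I)
  case Nil then show ?case by simp
next
  case (Cons x xs)
  have e: "{j. Suc j \<in> I \<inter> {..<length (x#xs)}} = {j. Suc j \<in> I} \<inter> {..<length xs}" by auto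
  show ?case unfolding nths_Cons e using Cons.IH[of "{j. Suc j \<in> I}"] by simp
qed

lemma nths_single: "i < length xs \<Longrightarrow> nths xs {i} = [xs!i]"
proof (induction xs arbitrary: i)
  case Nil then show ?case by simp
next
  case (Cons x xs)
  show ?case
  proof (cases i)
    case 0
    then show ?thesis by (simp add: nths_Cons)
  next
    case (Suc k)
    have "{j. Suc j \<in> {i}} = {k}" using Suc by auto
    then show ?thesis using Cons Suc by (simp add: nths_Cons)
  qed
qed

lemma nths_pair: "i < l \<Longrightarrow> l < length xs \<Longrightarrow> nths xs {i,l} = [xs!i, xs!l]"
proof (induction xs arbitrary: i l)
  case Nil then show ?case by simp
next
  case (Cons x xs)
  obtain m where m: "l = Suc m" using Cons.prems by (cases l) auto
  show ?case
  proof (cases i)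
    case 0
    have "{j. Suc j \<in> {i,l}} = {m}" using 0 m by auto
    then show ?thesis using Cons.prems 0 m by (simp add: nths_Cons nths_single)
  next
    case (Suc k)
    have "{j. Suc j \<in> {i,l}} = {k,m}" using Suc m by auto
    then show ?thesis using Cons Suc m by (simp add: nths_Cons)
  qed
qed

lemma nths_two: "nths xs I = [x,y] \<Longrightarrow> \<exists>i l. i < l \<and> l < length xs \<and> xs!i = x \<and> xs!l = y"
proof (induction xs arbitrary: I)
  case Nil then show ?case by simp
next
  case (Cons z xs)
  show ?case
  proof (cases "0 \<in> I")
    case True
    then have "nths xs {j. Suc j \<in> I} = [y]" "z = x" using Cons.prems by (auto simp: nths_Cons)
    then have "y \<in> set xs" by (metis in_set_nthsD list.set_intros(1))
    then obtain l where "l < length xs" "xs!l = y" by (metis in_set_conv_nth)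
    then show ?thesis using \<open>z = x\<close> by (intro exI[of _ 0] exI[of _ "Suc l"]) auto
  next
    case False
    then have "nths xs {j. Suc j \<in> I} = [x,y]" using Cons.prems by (auto simp: nths_Cons)
    from Cons.IH[OF this] obtain i l where "i < l \<and> l < length xs \<and> xs!i = x \<and> xs!l = y" by blast
    then show ?thesis by (intro exI[of _ "Suc i"] exI[of _ "Suc l"]) auto
  qed
qed

lemma all3: "(\<forall>i<(3::nat). P i) \<longleftrightarrow> P 0 \<and> P (Suc 0) \<and> P (Suc (Suc 0))"
  by (auto simp: numeral_3_eq_3 less_Suc_eq)

lemma all3': "(\<forall>i<Suc (Suc (Suc 0)). P i) \<longleftrightarrow> P 0 \<and> P (Suc 0) \<and> P (Suc (Suc 0))"
  by (auto simp: less_Suc_eq)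

lemma iso010: "order_iso s [0,1,0] \<longleftrightarrow> (\<exists>a b c. s = [a,b,c] \<and> a = c \<and> a < b)"
proof
  assume h: "order_iso s [0,1,0]"
  then have "length s = 3" by (simp add: order_iso_def)
  then obtain a b c where s: "s = [a,b,c]"
    by (metis (no_types, lifting) length_0_conv length_Suc_conv numeral_3_eq_3)
  show "\<exists>a b c. s = [a,b,c] \<and> a = c \<and> a < b" using h unfolding s order_iso_def
    by (simp add: all3 all3')
qed (auto simp: order_iso_def all3 all3')

lemma iso210: "order_iso s [2,1,0] \<longleftrightarrow> (\<exists>a b c. s = [a,b,c] \<and> c < b \<and> b < a)"
proof
  assume h: "order_iso s [2,1,0]"
  then have "length s = 3" by (simp add: order_iso_def)
  then obtain a b c where s: "s = [a,b,c]"
    by (metis (no_types, lifting) length_0_conv length_Suc_conv numeral_3_eq_3)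
  show "\<exists>a b c. s = [a,b,c] \<and> c < b \<and> b < a" using h unfolding s order_iso_def
    by (simp add: all3 all3')
qed (auto simp: order_iso_def all3 all3')

lemma nths_MV: "nths [m, v] J = (if 0 \<in> J then [m] else []) @ (if 1 \<in> J then [v] else [])"
  by (simp add: nths_Cons)

theorem mainTheorem8:
  fixes \<sigma> :: "nat list"
  assumes "\<sigma> \<noteq> []"
    and "avoids \<sigma> [0, 1, 0]"
    and "avoids \<sigma> [2, 1, 0]"
  shows "forb \<sigma> {[0, 1, 0], [2, 1, 0]} = q_val \<sigma> + r_val \<sigma>"
proof -
  define n where "n = length \<sigma>"
  define Mx where "Mx = Max (set \<sigma>)"
  define M where "M = Suc Mx"
  define S where "S = {\<sigma> ! l | l. l < length \<sigma> \<and> (\<exists>i<l. \<sigma> ! i > \<sigma> ! l)}"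
  define q where "q = q_val \<sigma>"
  have q_def': "q = (if S = {} then 0 else Max S)" unfolding q_def q_val_def S_def by simp
  have Ssub: "S \<subseteq> set \<sigma>" unfolding S_def by auto
  have finS: "finite S" using Ssub finite_subset by blast
  have leMx: "x \<in> set \<sigma> \<Longrightarrow> x \<le> Mx" for x unfolding Mx_def by simp
  have Sq: "y \<in> S \<Longrightarrow> y \<le> q" for y using finS q_def' by auto
  have qMx: "q \<le> Mx"
  proof (cases "S = {}")
    case True then show ?thesis using q_def' by simp
  next
    case False then have "q \<in> S" using q_def' finS by simp
    then show ?thesis using Ssub leMx by auto
  qed
  have qS: "0 < q \<Longrightarrow> \<exists>i l. i < l \<and> l < n \<and> \<sigma>!i > \<sigma>!l \<and> \<sigma>!l = q"
  proof -
    assume "0 < q"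
    then have "S \<noteq> {}" using q_def' by auto
    then have "q \<in> S" using q_def' finS by simp
    then show ?thesis unfolding S_def n_def by blast
  qed
  have nc: "\<not> contains \<sigma> p" if "p \<in> {[0,1,0],[2,1,0]}" for p
    using assms that unfolding avoids_def by auto
  have key: "{v \<in> {0..Max (set \<sigma>)}. \<exists>p\<in>{[0,1,0],[2,1,0]}. contains (\<sigma> @ [Suc (Max (set \<sigma>)), v]) p}
      = set \<sigma> \<union> {0..<q}" (is "?F = _")
  proof
    show "?F \<subseteq> set \<sigma> \<union> {0..<q}"
    proof
      fix v assume vF: "v \<in> ?F"
      have "\<exists>p\<in>{[0,1,0],[2,1,0]}. contains (\<sigma> @ [M, v]) p"
        using vF unfolding M_def Mx_def by (simp only: mem_Collect_eq)
      then obtain p where p: "p \<in> {[0,1,0],[2,1,0]}" and cp: "contains (\<sigma> @ [M, v]) p"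
        by (rule bexE)
      then obtain I where I: "I \<subseteq> {..<length (\<sigma> @ [M, v])}"
        and iso: "order_iso (nths (\<sigma> @ [M, v]) I) p"
        unfolding contains_def by blast
      define a where "a = nths \<sigma> I"
      define J where "J = {j. j + n \<in> I}"
      have eq: "nths (\<sigma> @ [M, v]) I = a @ (if 0 \<in> J then [M] else []) @ (if 1 \<in> J then [v] else [])"
        unfolding a_def J_def n_def nths_append nths_MV by simp
      have aS: "x \<in> set a \<Longrightarrow> x \<in> set \<sigma>" for x unfolding a_def by (rule in_set_nthsD)
      have aM: "x \<in> set a \<Longrightarrow> x < M" for x
      proof -
        assume "x \<in> set a"
        then have "x \<in> set \<sigma>" unfolding a_def by (rule in_set_nthsD)
        then have "x \<le> Mx" by (rule leMx)
        then show "x < M" using M_def by simp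
      qed
      have aC: "\<not> order_iso a p"
      proof
        assume "order_iso a p"
        moreover have "a = nths \<sigma> (I \<inter> {..<length \<sigma>})"
          unfolding a_def by (rule nths_inter)
        ultimately have "contains \<sigma> p" unfolding contains_def
          by (intro exI[of _ "I \<inter> {..<length \<sigma>}"]) simp
        then show False using nc p by blast
      qed
      show "v \<in> set \<sigma> \<union> {0..<q}"
      proof (cases "p = [0,1,0]")
        case True
        then obtain x y z where xyz: "a @ (if 0 \<in> J then [M] else []) @ (if 1 \<in> J then [v] else []) = [x,y,z]"
          "x = z" "x < y" using iso eq iso010 by auto
        show ?thesis
        proof (cases "0 \<in> J"; cases "1 \<in> J")
          assume "0 \<in> J" "1 \<in> J"
          then have "a = [x]" "v = x" using xyz by auto
          then show ?thesis using aS by auto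
        next
          assume "0 \<in> J" "1 \<notin> J"
          then have "a = [x,y]" "z = M" using xyz by auto
          then show ?thesis using aM[of x] aM[of y] xyz by auto
        next
          assume "0 \<notin> J" "1 \<in> J"
          then have "a = [x,y]" "z = v" using xyz by auto
          then show ?thesis using aS xyz by auto
        next
          assume "0 \<notin> J" "1 \<notin> J"
          then have "a = [x,y,z]" using xyz by auto
          then show ?thesis using aC True xyz iso010 by auto
        qed
      next
        case False
        then have p2: "p = [2,1,0]" using p by auto
        then obtain x y z where xyz: "a @ (if 0 \<in> J then [M] else []) @ (if 1 \<in> J then [v] else []) = [x,y,z]"
          "z < y" "y < x" using iso eq iso210 by auto
        show ?thesis
        proof (cases "0 \<in> J"; cases "1 \<in> J")
          assume "0 \<in> J" "1 \<in> J"
          then have "a = [x]" "y = M" using xyz by auto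
          then show ?thesis using aM[of x] aM[of y] xyz by auto
        next
          assume "0 \<in> J" "1 \<notin> J"
          then have "a = [x,y]" "z = M" using xyz by auto
          then show ?thesis using aM[of x] aM[of y] xyz by auto
        next
          assume "0 \<notin> J" "1 \<in> J"
          then have a2: "a = [x,y]" "z = v" using xyz by auto
          then obtain i l where "i < l \<and> l < length \<sigma> \<and> \<sigma>!i = x \<and> \<sigma>!l = y"
            using nths_two a_def by metis
          then have "y \<in> S" unfolding S_def using xyz by blast
          then show ?thesis using Sq xyz a2 by fastforce
        next
          assume "0 \<notin> J" "1 \<notin> J"
          then have "a = [x,y,z]" using xyz by auto
          then show ?thesis using aC p2 xyz iso210 by auto
        qed
      qed
    qed
  next
    show "set \<sigma> \<union> {0..<q} \<subseteq> ?F"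
    proof
      fix v assume v: "v \<in> set \<sigma> \<union> {0..<q}"
      have vMx: "v \<le> Mx" using v leMx qMx by auto
      show "v \<in> ?F"
      proof (cases "v \<in> set \<sigma>")
        case True
        then obtain i where i: "i < n" "\<sigma>!i = v" unfolding n_def by (metis in_set_conv_nth)
        have "nths (\<sigma> @ [M, v]) {i, n, Suc n} = [v, M, v]"
        proof -
          have "{i, n, Suc n} \<inter> {..<length \<sigma>} = {i}" using i n_def by auto
          then have "nths \<sigma> {i, n, Suc n} = [v]"
            using nths_inter[of \<sigma> "{i, n, Suc n}"] i nths_single[of i \<sigma>] unfolding n_def
            by simp
          moreover have "{j. j + n \<in> {i, n, Suc n}} = {0, 1}" using i by auto
          ultimately show ?thesis by (simp add: nths_append nths_MV n_def)
        qed
        moreover have "order_iso [v, M, v] [0,1,0]" using vMx M_def iso010 by auto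
        moreover have "{i, n, Suc n} \<subseteq> {..<length (\<sigma> @ [M, v])}" using i n_def by auto
        ultimately have "contains (\<sigma> @ [M, v]) [0,1,0]" unfolding contains_def by metis
        then show ?thesis using vMx unfolding M_def Mx_def by auto
      next
        case False
        then have vq: "v < q" using v by auto
        then obtain i l where il: "i < l" "l < n" "\<sigma>!i > \<sigma>!l" "\<sigma>!l = q" using qS by fastforce
        have "nths (\<sigma> @ [M, v]) {i, l, Suc n} = [\<sigma>!i, q, v]"
        proof -
          have "{i, l, Suc n} \<inter> {..<length \<sigma>} = {i, l}" using il n_def by auto
          then have "nths \<sigma> {i, l, Suc n} = [\<sigma>!i, q]"
            using nths_inter[of \<sigma> "{i, l, Suc n}"] il nths_pair[of i l \<sigma>] unfolding n_def
            by simp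
          moreover have "{j. j + n \<in> {i, l, Suc n}} = {1}" using il by auto
          ultimately show ?thesis by (simp add: nths_append nths_MV n_def)
        qed
        moreover have "order_iso [\<sigma>!i, q, v] [2,1,0]" using vq il iso210 by auto
        moreover have "{i, l, Suc n} \<subseteq> {..<length (\<sigma> @ [M, v])}" using il n_def by auto
        ultimately have "contains (\<sigma> @ [M, v]) [2,1,0]" unfolding contains_def by metis
        then show ?thesis using vMx unfolding M_def Mx_def by auto
      qed
    qed
  qed
  have "set \<sigma> \<union> {0..<q} = {0..<q} \<union> {x \<in> set \<sigma>. x \<ge> q}" by auto
  then have "card (set \<sigma> \<union> {0..<q}) = q + card {x \<in> set \<sigma>. x \<ge> q}"
    by (simp add: card_Un_disjoint disjoint_iff)
  then show ?thesis unfolding forb_def key r_val_def q_def by simp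
qed

end
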